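(* The elements $\delta_{2n}=\Theta(x\otimes\operatorname{ad}_y^{\,2n}(x))$, $n\ge 0$, form a basis of the subspace of $F(L)$ spanned by classes of $x$-degree $2$ (i.e. containing exactly two letters $x$).
   Context: $A=\mathbb{R}\langle x,y\rangle$; $L\subset A$ is the free Lie algebra on $x,y$; $\operatorname{ad}_y(l)=[y,l]=yl-ly$. $F(L)$ is the quotient of $L\otimes L$ by the span of $a\otimes b-b\otimes a$ and $a\otimes[b,c]-[a,b]\otimes c$ ($a,b,c\in L$), with canonical projection $\Theta:L\otimes L\to F(L)$. $F(L)$ is graded by the number of letters $x$ and $y$. *)

theory Defs
  imports Complex_Main
begin

text \<open>Words over the alphabet {x,y}: True encodes the letter x, False the letter y.
  An element of A = R<x,y> is a coefficient function on words.\<close>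

type_synonym ncpoly = "bool list \<Rightarrow> real"

definition genX :: ncpoly where "genX = (\<lambda>w. if w = [True] then 1 else 0)"
definition genY :: ncpoly where "genY = (\<lambda>w. if w = [False] then 1 else 0)"

definition pmul :: "ncpoly \<Rightarrow> ncpoly \<Rightarrow> ncpoly" where
  "pmul p q = (\<lambda>w. \<Sum>i\<le>length w. p (take i w) * q (drop i w))"

definition brk :: "ncpoly \<Rightarrow> ncpoly \<Rightarrow> ncpoly" where
  "brk a b = (\<lambda>w. pmul a b w - pmul b a w)"

text \<open>The free Lie algebra L: the smallest subspace of A containing x, y and closed under brackets.\<close>
inductive_set lie :: "ncpoly set" where
  lie_X: "genX \<in> lie"
| lie_Y: "genY \<in> lie"
| lie_add: "a \<in> lie \<Longrightarrow> b \<in> lie \<Longrightarrow> (\<lambda>w. a w + b w) \<in> lie"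
| lie_smult: "a \<in> lie \<Longrightarrow> (\<lambda>w. c * a w) \<in> lie"
| lie_brk: "a \<in> lie \<Longrightarrow> b \<in> lie \<Longrightarrow> brk a b \<in> lie"

definition adY :: "ncpoly \<Rightarrow> ncpoly" where "adY l = brk genY l"

text \<open>L \<otimes> L realised inside A \<otimes> A = coefficient functions on pairs of words.\<close>
type_synonym tens = "bool list \<times> bool list \<Rightarrow> real"

definition tensor :: "ncpoly \<Rightarrow> ncpoly \<Rightarrow> tens" where
  "tensor a b = (\<lambda>(u, v). a u * b v)"

inductive_set LL :: "tens set" where
  LL_zero: "(\<lambda>p. 0) \<in> LL"
| LL_tensor: "a \<in> lie \<Longrightarrow> b \<in> lie \<Longrightarrow> tensor a b \<in> LL"
| LL_add: "s \<in> LL \<Longrightarrow> t \<in> LL \<Longrightarrow> (\<lambda>p. s p + t p) \<in> LL"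
| LL_smult: "s \<in> LL \<Longrightarrow> (\<lambda>p. c * s p) \<in> LL"

text \<open>The subspace of relations; F(L) = LL / Rel, and Theta(s) = Theta(t) iff s - t in Rel.\<close>
inductive_set Rel :: "tens set" where
  Rel_zero: "(\<lambda>p. 0) \<in> Rel"
| Rel_sym: "a \<in> lie \<Longrightarrow> b \<in> lie \<Longrightarrow> (\<lambda>p. tensor a b p - tensor b a p) \<in> Rel"
| Rel_inv: "a \<in> lie \<Longrightarrow> b \<in> lie \<Longrightarrow> c \<in> lie \<Longrightarrow>
      (\<lambda>p. tensor a (brk b c) p - tensor (brk a b) c p) \<in> Rel"
| Rel_add: "s \<in> Rel \<Longrightarrow> t \<in> Rel \<Longrightarrow> (\<lambda>p. s p + t p) \<in> Rel"
| Rel_smult: "s \<in> Rel \<Longrightarrow> (\<lambda>p. c * s p) \<in> Rel"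

definition xdeg :: "bool list \<Rightarrow> nat" where "xdeg w = length (filter id w)"

definition LL_xdeg2 :: "tens set" where
  "LL_xdeg2 = {t \<in> LL. \<forall>u v. t (u, v) \<noteq> 0 \<longrightarrow> xdeg u + xdeg v = 2}"

text \<open>Representative of delta_{2n} = Theta(x \<otimes> ad_y^{2n}(x)).\<close>
definition delta :: "nat \<Rightarrow> tens" where
  "delta n = tensor genX ((adY ^^ (2 * n)) genX)"

end

theory Submission
  imports Defs
begin


lemma pmul_assoc: "pmul a (pmul b c) w = pmul (pmul a b) c w"
proof -
  let ?n = "length w"
  let ?g = "\<lambda>i j. a (take i w) * b (take j (drop i w)) * c (drop (i+j) w)"
  have "pmul a (pmul b c) w = (\<Sum>i\<le>?n. \<Sum>j\<le>?n - i. ?g i j)"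
    by (simp add: pmul_def sum_distrib_left mult.assoc add.commute)
  also have "\<dots> = (\<Sum>(i,j)\<in>{(i,j). i+j \<le> ?n}. ?g i j)"
  proof -
    have "{(i,j). i+j \<le> ?n} = Sigma {..?n} (\<lambda>i. {..?n - i})" by auto
    then show ?thesis by (simp add: sum.Sigma)
  qed
  also have "\<dots> = (\<Sum>k\<le>?n. \<Sum>i\<le>k. ?g i (k - i))"
    by (rule sum.triangle_reindex_eq)
  also have "\<dots> = pmul (pmul a b) c w"
    unfolding pmul_def
    by (auto simp: sum_distrib_right drop_take intro!: sum.cong)
  finally show ?thesis .
qed



lemma pmul_genX: "pmul genX f w = (case w of [] \<Rightarrow> 0 | b # v \<Rightarrow> if b then f v else 0)"
proof (cases w)
  case Nil then show ?thesis by (simp add: pmul_def genX_def)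
next
  case (Cons b v)
  have "pmul genX f w = (\<Sum>i\<le>Suc (length v). genX (take i (b#v)) * f (drop i (b#v)))"
    by (simp add: pmul_def Cons)
  also have "\<dots> = genX [] * f (b#v) + (\<Sum>i\<le>length v. genX (b # take i v) * f (drop i v))"
    by (subst sum.atMost_Suc_shift) simp
  also have "\<dots> = (\<Sum>i\<le>length v. (if i = 0 then (if b then f v else 0) else 0))"
  proof -
    have "genX [] = 0" by (simp add: genX_def)
    moreover have "(\<Sum>i\<le>length v. genX (b # take i v) * f (drop i v)) = (\<Sum>i\<le>length v. (if i = 0 then (if b then f v else 0) else 0))"
      by (rule sum.cong) (auto simp: genX_def)
    ultimately show ?thesis by simp
  qed
  also have "\<dots> = (if b then f v else 0)" by simp
  finally show ?thesis by (simp add: Cons)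
qed

lemma pmul_genY: "pmul genY f w = (case w of [] \<Rightarrow> 0 | b # v \<Rightarrow> if b then 0 else f v)"
proof (cases w)
  case Nil then show ?thesis by (simp add: pmul_def genY_def)
next
  case (Cons b v)
  have "pmul genY f w = (\<Sum>i\<le>Suc (length v). genY (take i (b#v)) * f (drop i (b#v)))"
    by (simp add: pmul_def Cons)
  also have "\<dots> = genY [] * f (b#v) + (\<Sum>i\<le>length v. genY (b # take i v) * f (drop i v))"
    by (subst sum.atMost_Suc_shift) simp
  also have "\<dots> = (\<Sum>i\<le>length v. (if i = 0 then (if b then 0 else f v) else 0))"
  proof -
    have "genY [] = 0" by (simp add: genY_def)
    moreover have "(\<Sum>i\<le>length v. genY (b # take i v) * f (drop i v)) = (\<Sum>i\<le>length v. (if i = 0 then (if b then 0 else f v) else 0))"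
      by (rule sum.cong) (auto simp: genY_def)
    ultimately show ?thesis by simp
  qed
  also have "\<dots> = (if b then 0 else f v)" by simp
  finally show ?thesis by (simp add: Cons)
qed

lemma pmul_Y_right_Nil: "pmul f genY [] = 0"
  by (simp add: pmul_def genY_def)

lemma pmul_Y_right_snoc: "pmul f genY (v @ [b]) = (if b then 0 else f v)"
proof -
  have "pmul f genY (v @ [b]) = (\<Sum>i\<le>Suc (length v). f (take i (v @ [b])) * genY (drop i (v @ [b])))"
    by (simp add: pmul_def)
  also have "\<dots> = (\<Sum>i\<le>length v. f (take i (v @ [b])) * genY (drop i (v @ [b])))"
    by (simp add: genY_def)
  also have "\<dots> = (\<Sum>i\<le>length v. (if i = length v then (if b then 0 else f v) else 0))"
    by (rule sum.cong) (auto simp: genY_def)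
  also have "\<dots> = (if b then 0 else f v)" by simp
  finally show ?thesis .
qed

lemma pmul_add_left: "pmul (\<lambda>w. a w + b w) c w = pmul a c w + pmul b c w"
  by (simp add: pmul_def distrib_right sum.distrib)
lemma pmul_add_right: "pmul c (\<lambda>w. a w + b w) w = pmul c a w + pmul c b w"
  by (simp add: pmul_def distrib_left sum.distrib)
lemma pmul_smult_left: "pmul (\<lambda>w. k * a w) c w = k * pmul a c w"
  by (simp add: pmul_def sum_distrib_left mult.assoc)
lemma pmul_smult_right: "pmul c (\<lambda>w. k * a w) w = k * pmul c a w"
  by (simp add: pmul_def sum_distrib_left algebra_simps)
lemma pmul_diff_right: "pmul c (\<lambda>w. a w - b w) w = pmul c a w - pmul c b w"
  by (simp add: pmul_def right_diff_distrib sum_subtractf)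
lemma pmul_diff_left: "pmul (\<lambda>w. a w - b w) c w = pmul a c w - pmul b c w"
  by (simp add: pmul_def left_diff_distrib sum_subtractf)
lemma pmul_zero_left: "pmul (\<lambda>w. 0) c w = 0"
  by (simp add: pmul_def)
lemma pmul_zero_right: "pmul c (\<lambda>w. 0) w = 0"
  by (simp add: pmul_def)

lemma brk_add_left: "brk (\<lambda>w. a w + b w) c = (\<lambda>w. brk a c w + brk b c w)"
  by (simp add: fun_eq_iff brk_def pmul_add_left pmul_add_right algebra_simps)
lemma brk_add_right: "brk c (\<lambda>w. a w + b w) = (\<lambda>w. brk c a w + brk c b w)"
  by (simp add: fun_eq_iff brk_def pmul_add_left pmul_add_right algebra_simps)
lemma brk_smult_left: "brk (\<lambda>w. k * a w) c = (\<lambda>w. k * brk a c w)"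
  by (simp add: brk_def pmul_smult_left pmul_smult_right right_diff_distrib)
lemma brk_smult_right: "brk c (\<lambda>w. k * a w) = (\<lambda>w. k * brk c a w)"
  by (simp add: brk_def pmul_smult_left pmul_smult_right right_diff_distrib)
lemma brk_zero_left: "brk (\<lambda>w. 0) c = (\<lambda>w. 0)"
  by (simp add: brk_def pmul_zero_left pmul_zero_right)
lemma brk_zero_right: "brk c (\<lambda>w. 0) = (\<lambda>w. 0)"
  by (simp add: brk_def pmul_zero_left pmul_zero_right)
lemma brk_swap: "brk b a = (\<lambda>w. - brk a b w)"
  by (simp add: brk_def)
lemma brk_self: "brk a a = (\<lambda>w. 0)"
  by (simp add: brk_def)

abbreviation adx :: "nat \<Rightarrow> ncpoly" where "adx m \<equiv> (adY ^^ m) genX"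

lemma adx_Suc: "adx (Suc m) = brk genY (adx m)"
  by (simp add: adY_def)

lemma brkY_Cons: "brk genY f (b # v) = (if b then 0 else f v) - pmul f genY (b # v)"
  by (simp add: brk_def pmul_genY)

lemma adx_support: "adx m w \<noteq> 0 \<Longrightarrow> length w = Suc m \<and> xdeg w = 1"
proof (induction m arbitrary: w)
  case 0
  then show ?case by (auto simp: genX_def xdeg_def split: if_splits)
next
  case (Suc m)
  have "pmul genY (adx m) w \<noteq> 0 \<or> pmul (adx m) genY w \<noteq> 0"
    using Suc.prems unfolding adx_Suc brk_def by auto
  then show ?case
  proof
    assume "pmul genY (adx m) w \<noteq> 0"
    then obtain v where "w = False # v" "adx m v \<noteq> 0"
      by (auto simp: pmul_genY split: list.splits if_splits)
    with Suc.IH[of v] show ?thesis by (simp add: xdeg_def)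
  next
    assume h: "pmul (adx m) genY w \<noteq> 0"
    show ?thesis
    proof (cases w rule: rev_cases)
      case Nil then show ?thesis using h by (simp add: pmul_Y_right_Nil)
    next
      case (snoc v b)
      then have "\<not> b" "adx m v \<noteq> 0" using h by (auto simp: pmul_Y_right_snoc split: if_splits)
      with Suc.IH[of v] snoc show ?thesis by (simp add: xdeg_def)
    qed
  qed
qed

lemma adx_last: "adx m (replicate m False @ [True]) = 1"
proof (induction m)
  case 0 then show ?case by (simp add: genX_def)
next
  case (Suc m)
  have "adx (Suc m) (replicate (Suc m) False @ [True])
      = pmul genY (adx m) (False # (replicate m False @ [True])) - pmul (adx m) genY ((False # replicate m False) @ [True])"
    by (simp add: adY_def brk_def)
  also have "\<dots> = 1" using Suc.IH by (simp only: pmul_genY pmul_Y_right_snoc) simp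
  finally show ?case .
qed

lemma adx_first: "adx m (True # replicate m False) = (-1) ^ m"
proof (induction m)
  case 0 then show ?case by (simp add: genX_def)
next
  case (Suc m)
  have "adx (Suc m) (True # replicate (Suc m) False)
      = pmul genY (adx m) (True # replicate (Suc m) False) - pmul (adx m) genY ((True # replicate m False) @ [False])"
    by (simp add: adY_def brk_def replicate_append_same)
  also have "\<dots> = (-1) ^ Suc m" using Suc.IH by (simp only: pmul_genY pmul_Y_right_snoc) simp
  finally show ?case .
qed

lemma adx_lie: "adx m \<in> lie"
  by (induction m) (auto simp: adY_def intro: lie.intros)

lemma adY_pow_lie: "a \<in> lie \<Longrightarrow> (adY ^^ k) a \<in> lie"
  by (induction k) (auto simp: adY_def intro: lie.intros)



definition phi :: "bool list \<Rightarrow> tens \<Rightarrow> real" where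
  "phi z t = (\<Sum>k<length z. \<Sum>i\<le>length z. t (take i (rotate k z), drop i (rotate k z)))"

definition trf :: "bool list \<Rightarrow> ncpoly \<Rightarrow> ncpoly \<Rightarrow> real" where
  "trf z a b = (\<Sum>k<length z. pmul a b (rotate k z))"

lemma phi_tensor: "phi z (tensor a b) = trf z a b"
  by (simp add: phi_def trf_def pmul_def tensor_def)

lemma rot_split:
  assumes "i \<le> length w"
  shows "take (length w - i) (rotate i w) = drop i w \<and> drop (length w - i) (rotate i w) = take i w"
proof (cases "i = length w")
  case True then show ?thesis by simp
next
  case False
  then have "i < length w" using assms by simp
  then have "rotate i w = drop i w @ take i w" by (simp add: rotate_drop_take)
  then show ?thesis using assms by simp
qed

lemma trf_sym: "trf z a b = trf z b a"
proof -
  let ?L = "length z"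
  let ?S = "{..<?L} \<times> {..?L}"
  let ?g = "\<lambda>(k,i). a (take i (rotate k z)) * b (drop i (rotate k z))"
  let ?g' = "\<lambda>(k,i). b (take i (rotate k z)) * a (drop i (rotate k z))"
  let ?h = "\<lambda>(k,i). ((k + i) mod ?L, ?L - i)"
  have 1: "trf z a b = sum ?g ?S"
    by (simp add: trf_def pmul_def sum.cartesian_product)
  have 2: "trf z b a = sum ?g' ?S"
    by (simp add: trf_def pmul_def sum.cartesian_product)
  have key: "?g' (?h p) = ?g p" if P: "p \<in> ?S" for p
  proof -
    obtain k i where p: "p = (k,i)" and k: "k < ?L" and i: "i \<le> ?L" using P by (cases p) auto
    let ?w = "rotate k z"
    have "rotate ((k + i) mod ?L) z = rotate i ?w"
      by (metis rotate_conv_mod rotate_rotate add.commute)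
    moreover have "length ?w = ?L" by simp
    ultimately show ?thesis using rot_split[of i ?w] i p by (simp add: mult.commute)
  qed
  have "sum ?g ?S = sum ?g' ?S"
  proof (rule sum.reindex_bij_witness[where i = ?h and j = ?h])
    fix p assume "p \<in> ?S"
    then obtain k i where p: "p = (k,i)" and k: "k < ?L" and i: "i \<le> ?L" by (cases p) auto
    show "?h (?h p) = p"
    proof (cases "i = 0")
      case True then show ?thesis using p k by (simp)
    next
      case False
      have "(((k + i) mod ?L) + (?L - i)) mod ?L = (k + i + (?L - i)) mod ?L"
        by (simp add: mod_add_left_eq)
      also have "\<dots> = (k + ?L) mod ?L" using i by simp
      also have "\<dots> = k" using k by simp
      finally show ?thesis using p i by simp
    qed
    have "0 < ?L" using k by linarith
    then show "?h p \<in> ?S" using p k i by auto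
    show "?h (?h p) = p" by fact
    show "?h p \<in> ?S" by fact
    show "?g' (?h p) = ?g p" using key \<open>p \<in> ?S\<close> .
  qed
  then show ?thesis using 1 2 by simp
qed

lemma trf_brk_right: "trf z a (brk b c) = trf z a (pmul b c) - trf z a (pmul c b)"
  by (simp add: trf_def brk_def pmul_diff_right sum_subtractf)
lemma trf_brk_left: "trf z (brk a b) c = trf z (pmul a b) c - trf z (pmul b a) c"
  by (simp add: trf_def brk_def pmul_diff_left sum_subtractf)
lemma trf_assoc: "trf z a (pmul b c) = trf z (pmul a b) c"
  by (simp add: trf_def pmul_assoc)

lemma trf_inv: "trf z a (brk b c) = trf z (brk a b) c"
proof -
  have "trf z a (pmul c b) = trf z (pmul b a) c"
    by (metis trf_assoc trf_sym)
  then show ?thesis by (simp add: trf_brk_right trf_brk_left trf_assoc)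
qed

lemma phi_diff: "phi z (\<lambda>p. s p - t p) = phi z s - phi z t"
  by (simp add: phi_def sum_subtractf)
lemma phi_add: "phi z (\<lambda>p. s p + t p) = phi z s + phi z t"
  by (simp add: phi_def sum.distrib)
lemma phi_smult: "phi z (\<lambda>p. c * s p) = c * phi z s"
  by (simp add: phi_def sum_distrib_left)
lemma phi_sum: "phi z (\<lambda>p. \<Sum>n<N. c n * d n p) = (\<Sum>n<N. c n * phi z (d n))"
  by (simp add: phi_def sum_distrib_left sum.swap[of _ "{..<N}"])

lemma phi_Rel: "s \<in> Rel \<Longrightarrow> phi z s = 0"
proof (induction rule: Rel.induct)
  case Rel_zero then show ?case by (simp add: phi_def)
next
  case (Rel_sym a b) then show ?case by (simp add: phi_diff phi_tensor trf_sym)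
next
  case (Rel_inv a b c) then show ?case by (simp add: phi_diff phi_tensor trf_inv)
next
  case (Rel_add s t) then show ?case by (simp add: phi_add)
next
  case (Rel_smult s c) then show ?case by (simp add: phi_smult)
qed

definition zz :: "nat \<Rightarrow> bool list" where "zz n = True # True # replicate (2*n) False"

lemma phi_delta_other: "m \<noteq> n \<Longrightarrow> phi (zz n) (delta m) = 0"
proof -
  assume mn: "m \<noteq> n"
  have "pmul genX (adx (2*m)) (rotate k (zz n)) = 0" for k
  proof -
    let ?w = "rotate k (zz n)"
    have len: "length ?w = Suc (Suc (2*n))" by (simp add: zz_def)
    then obtain b v where w: "?w = b # v" by (cases ?w) auto
    with len have "length v = Suc (2*n)" by simp
    then have "adx (2*m) v = 0" using adx_support[of "2*m" v] mn by auto
    then show ?thesis by (simp add: pmul_genX w)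
  qed
  then show ?thesis by (simp add: delta_def phi_tensor trf_def)
qed

lemma phi_delta_same: "phi (zz n) (delta n) = 2"
proof -
  let ?f = "adx (2*n)"
  let ?g = "\<lambda>k. pmul genX ?f (rotate k (zz n))"
  have "phi (zz n) (delta n) = (\<Sum>k<Suc (Suc (2*n)). ?g k)"
    by (simp add: delta_def phi_tensor trf_def zz_def)
  also have "\<dots> = ?g 0 + ?g (Suc 0) + (\<Sum>k<2*n. ?g (Suc (Suc k)))"
    by (subst sum.lessThan_Suc_shift, subst sum.lessThan_Suc_shift) (simp only: add.assoc)
  also have "(\<Sum>k<2*n. ?g (Suc (Suc k))) = 0"
  proof (rule sum.neutral, rule ballI)
    fix k assume "k \<in> {..<2*n}"
    then have k: "k < 2*n" by simp
    have "rotate (Suc (Suc k)) (zz n) = rotate k (replicate (2*n) False @ [True, True])"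
    proof -
      have "rotate (Suc (Suc k)) (zz n) = rotate k (rotate 2 (zz n))"
        by (simp add: rotate_rotate)
      moreover have "rotate 2 (zz n) = replicate (2*n) False @ [True, True]"
        by (simp add: zz_def numeral_2_eq_2 del: mult_2 mult_Suc mult_Suc_right)
      ultimately show ?thesis by simp
    qed
    also have "\<dots> = drop k (replicate (2*n) False @ [True, True]) @ take k (replicate (2*n) False @ [True, True])"
      using k by (simp add: rotate_drop_take)
    also have "\<dots> = False # (replicate (2*n - Suc k) False @ [True, True]) @ take k (replicate (2*n) False @ [True, True])"
      using k by (simp add: Cons_replicate_eq[symmetric]) (metis Suc_diff_Suc replicate_Suc)
    finally show "?g (Suc (Suc k)) = 0" by (simp add: pmul_genX)
  qed
  also have "?g 0 = 1" using adx_first[of "2*n"] by (simp add: pmul_genX zz_def)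
  also have "?g (Suc 0) = 1" using adx_last[of "2*n"] by (simp add: pmul_genX zz_def)
  finally show ?thesis by simp
qed

lemma lin_indep:
  assumes "(\<lambda>p. \<Sum>n<N. c n * delta n p) \<in> Rel" "n < N"
  shows "c n = 0"
proof -
  have "0 = phi (zz n) (\<lambda>p. \<Sum>m<N. c m * delta m p)" using phi_Rel[OF assms(1)] by simp
  also have "\<dots> = (\<Sum>m<N. c m * phi (zz n) (delta m))" by (rule phi_sum)
  also have "\<dots> = (\<Sum>m<N. if m = n then 2 * c n else 0)"
    by (rule sum.cong) (auto simp: phi_delta_other phi_delta_same)
  also have "\<dots> = 2 * c n" using assms(2) by simp
  finally show ?thesis by simp
qed



definition pr :: "nat \<Rightarrow> ncpoly \<Rightarrow> ncpoly" where
  "pr d f = (\<lambda>w. if xdeg w = d then f w else 0)"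

lemma xdeg_split: "xdeg w = xdeg (take j w) + xdeg (drop j w)"
  by (metis append_take_drop_id filter_append length_append xdeg_def)

lemma inner_delta:
  "(\<Sum>i\<le>d. (if xdeg u = i then x else 0) * (if xdeg v = d - i then y else 0))
   = (if xdeg u + xdeg v = d then x * y else (0::real))"
proof -
  have "(\<Sum>i\<le>d. (if xdeg u = i then x else 0) * (if xdeg v = d - i then y else 0))
      = (\<Sum>i\<le>d. (if i = xdeg u then (if xdeg v = d - xdeg u then x * y else 0) else 0))"
    by (rule sum.cong) auto
  also have "\<dots> = (if xdeg u \<le> d then (if xdeg v = d - xdeg u then x * y else 0) else 0)"
    by (simp add: sum.delta)
  also have "\<dots> = (if xdeg u + xdeg v = d then x * y else 0)" by auto
  finally show ?thesis .
qed

lemma pr_pmul: "pr d (pmul a b) w = (\<Sum>i\<le>d. pmul (pr i a) (pr (d-i) b) w)"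
proof -
  have "(\<Sum>i\<le>d. pmul (pr i a) (pr (d-i) b) w)
     = (\<Sum>i\<le>d. \<Sum>j\<le>length w. (if xdeg (take j w) = i then a (take j w) else 0) * (if xdeg (drop j w) = d - i then b (drop j w) else 0))"
    by (simp add: pmul_def pr_def)
  also have "\<dots> = (\<Sum>j\<le>length w. \<Sum>i\<le>d. (if xdeg (take j w) = i then a (take j w) else 0) * (if xdeg (drop j w) = d - i then b (drop j w) else 0))"
    by (rule sum.swap)
  also have "\<dots> = (\<Sum>j\<le>length w. if xdeg w = d then a (take j w) * b (drop j w) else 0)"
    by (rule sum.cong) (simp_all add: inner_delta xdeg_split[of w, symmetric])
  also have "\<dots> = pr d (pmul a b) w"
    by (simp add: pr_def pmul_def)
  finally show ?thesis by simp
qed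

lemma pr_brk_pre: "pr d (brk a b) w = pr d (pmul a b) w - pr d (pmul b a) w"
  by (simp add: pr_def brk_def)

lemma pr0_brk: "pr 0 (brk a b) = brk (pr 0 a) (pr 0 b)"
  by (rule ext, subst pr_brk_pre, simp only: pr_pmul) (simp add: brk_def algebra_simps)

lemma pr1_brk: "pr 1 (brk a b) = (\<lambda>w. brk (pr 0 a) (pr 1 b) w + brk (pr 1 a) (pr 0 b) w)"
  by (rule ext, subst pr_brk_pre, simp only: pr_pmul) (simp add: brk_def algebra_simps)

lemma pr2_brk: "pr 2 (brk a b) = (\<lambda>w. brk (pr 0 a) (pr 2 b) w + brk (pr 1 a) (pr 1 b) w + brk (pr 2 a) (pr 0 b) w)"
  by (rule ext, subst pr_brk_pre, simp only: pr_pmul) (simp add: brk_def numeral_2_eq_2 algebra_simps)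

lemma pr_add: "pr d (\<lambda>w. a w + b w) = (\<lambda>w. pr d a w + pr d b w)"
  by (simp add: pr_def fun_eq_iff)
lemma pr_smult: "pr d (\<lambda>w. c * a w) = (\<lambda>w. c * pr d a w)"
  by (simp add: pr_def fun_eq_iff)

inductive_set S1 :: "ncpoly set" where
  S1_zero: "(\<lambda>w. 0) \<in> S1"
| S1_gen: "adx m \<in> S1"
| S1_add: "a \<in> S1 \<Longrightarrow> b \<in> S1 \<Longrightarrow> (\<lambda>w. a w + b w) \<in> S1"
| S1_smult: "a \<in> S1 \<Longrightarrow> (\<lambda>w. c * a w) \<in> S1"

inductive_set S2 :: "ncpoly set" where
  S2_zero: "(\<lambda>w. 0) \<in> S2"
| S2_gen: "(adY ^^ k) (brk (adx i) (adx j)) \<in> S2"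
| S2_add: "a \<in> S2 \<Longrightarrow> b \<in> S2 \<Longrightarrow> (\<lambda>w. a w + b w) \<in> S2"
| S2_smult: "a \<in> S2 \<Longrightarrow> (\<lambda>w. c * a w) \<in> S2"

definition S0 :: "ncpoly set" where "S0 = {f. \<exists>c. f = (\<lambda>w. c * genY w)}"

lemma S1_neg: "a \<in> S1 \<Longrightarrow> (\<lambda>w. - a w) \<in> S1"
  using S1_smult[of a "-1"] by simp
lemma S2_neg: "a \<in> S2 \<Longrightarrow> (\<lambda>w. - a w) \<in> S2"
  using S2_smult[of a "-1"] by simp

lemma adY_S1: "s \<in> S1 \<Longrightarrow> adY s \<in> S1"
proof (induction rule: S1.induct)
  case S1_zero then show ?case by (simp add: adY_def brk_zero_right S1.S1_zero)
next
  case (S1_gen m) then show ?case using S1.S1_gen[of "Suc m"] by simp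
next
  case (S1_add a b) then show ?case by (simp add: adY_def brk_add_right S1.S1_add)
next
  case (S1_smult a c) then show ?case by (simp add: adY_def brk_smult_right S1.S1_smult)
qed

lemma adY_S2: "s \<in> S2 \<Longrightarrow> adY s \<in> S2"
proof (induction rule: S2.induct)
  case S2_zero then show ?case by (simp add: adY_def brk_zero_right S2.S2_zero)
next
  case (S2_gen k i j) then show ?case using S2.S2_gen[of "Suc k" i j] by simp
next
  case (S2_add a b) then show ?case by (simp add: adY_def brk_add_right S2.S2_add)
next
  case (S2_smult a c) then show ?case by (simp add: adY_def brk_smult_right S2.S2_smult)
qed

lemma brk_Y_S1: "s \<in> S1 \<Longrightarrow> brk (\<lambda>w. c * genY w) s \<in> S1"
  using adY_S1[of s] by (simp add: brk_smult_left adY_def S1_smult)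
lemma brk_S1_Y: "s \<in> S1 \<Longrightarrow> brk s (\<lambda>w. c * genY w) \<in> S1"
  using brk_Y_S1[of s c] by (subst brk_swap) (rule S1_neg)
lemma brk_Y_S2: "s \<in> S2 \<Longrightarrow> brk (\<lambda>w. c * genY w) s \<in> S2"
  using adY_S2[of s] by (simp add: brk_smult_left adY_def S2_smult)
lemma brk_S2_Y: "s \<in> S2 \<Longrightarrow> brk s (\<lambda>w. c * genY w) \<in> S2"
  using brk_Y_S2[of s c] by (subst brk_swap) (rule S2_neg)

lemma brk_adx_S1: "t \<in> S1 \<Longrightarrow> brk (adx m) t \<in> S2"
proof (induction rule: S1.induct)
  case S1_zero then show ?case by (simp add: brk_zero_right S2_zero)
next
  case (S1_gen m') then show ?case using S2_gen[of 0 m m'] by simp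
next
  case (S1_add a b) then show ?case by (simp add: brk_add_right S2_add)
next
  case (S1_smult a c) then show ?case by (simp add: brk_smult_right S2_smult)
qed

lemma brk_S1_S1: "s \<in> S1 \<Longrightarrow> t \<in> S1 \<Longrightarrow> brk s t \<in> S2"
proof (induction rule: S1.induct)
  case S1_zero then show ?case by (simp add: brk_zero_left S2_zero)
next
  case (S1_gen m) then show ?case by (rule brk_adx_S1)
next
  case (S1_add a b) then show ?case by (simp add: brk_add_left S2_add)
next
  case (S1_smult a c) then show ?case by (simp add: brk_smult_left S2_smult)
qed

lemma lie_zero: "(\<lambda>w. 0) \<in> lie"
  using lie_smult[OF lie_X, of 0] by simp

lemma S1_lie: "s \<in> S1 \<Longrightarrow> s \<in> lie"
  by (induction rule: S1.induct) (auto intro: lie.intros lie_zero adx_lie)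
lemma S2_lie: "s \<in> S2 \<Longrightarrow> s \<in> lie"
  by (induction rule: S2.induct) (auto intro: lie.intros lie_zero adx_lie adY_pow_lie)
lemma S0_lie: "s \<in> S0 \<Longrightarrow> s \<in> lie"
  by (auto simp: S0_def intro: lie.intros)

lemma S0_zero: "(\<lambda>w. 0) \<in> S0"
  unfolding S0_def by (rule CollectI, rule exI[of _ 0]) simp

lemma pr_lie: "a \<in> lie \<Longrightarrow> pr 0 a \<in> S0 \<and> pr 1 a \<in> S1 \<and> pr 2 a \<in> S2"
proof (induction rule: lie.induct)
  case lie_X
  have "pr 0 genX = (\<lambda>w. 0)" "pr 2 genX = (\<lambda>w. 0)" "pr 1 genX = adx 0"
    by (auto simp: fun_eq_iff pr_def genX_def xdeg_def)
  then show ?case using S0_zero S1_gen[of 0] S2_zero by simp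
next
  case lie_Y
  have "pr 0 genY = (\<lambda>w. 1 * genY w)" "pr 2 genY = (\<lambda>w. 0)" "pr 1 genY = (\<lambda>w. 0)"
    by (auto simp: fun_eq_iff pr_def genY_def xdeg_def)
  then show ?case using S1_zero S2_zero unfolding S0_def by (auto intro!: exI[of _ 1])
next
  case (lie_add a b)
  then obtain c d where "pr 0 a = (\<lambda>w. c * genY w)" "pr 0 b = (\<lambda>w. d * genY w)"
    by (auto simp: S0_def)
  then have "pr 0 (\<lambda>w. a w + b w) = (\<lambda>w. (c + d) * genY w)"
    by (simp add: pr_add fun_eq_iff distrib_right)
  with lie_add show ?case by (auto simp: pr_add S0_def intro: S1_add S2_add)
next
  case (lie_smult a c)
  then obtain d where "pr 0 a = (\<lambda>w. d * genY w)"
    by (auto simp: S0_def)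
  then have "pr 0 (\<lambda>w. c * a w) = (\<lambda>w. (c * d) * genY w)"
    by (simp add: pr_smult fun_eq_iff)
  with lie_smult show ?case by (auto simp: pr_smult S0_def intro: S1_smult S2_smult)
next
  case (lie_brk a b)
  then obtain c d where c: "pr 0 a = (\<lambda>w. c * genY w)" and d: "pr 0 b = (\<lambda>w. d * genY w)"
    by (auto simp: S0_def)
  have "brk (\<lambda>w. c * genY w) (\<lambda>w. d * genY w) = (\<lambda>w. 0)"
    by (simp add: brk_smult_left brk_smult_right brk_self)
  then have 0: "pr 0 (brk a b) \<in> S0" using c d S0_zero by (simp add: pr0_brk)
  have 1: "pr 1 (brk a b) \<in> S1"
    unfolding pr1_brk c d using lie_brk.IH by (auto intro!: S1_add brk_Y_S1 brk_S1_Y)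
  have 2: "pr 2 (brk a b) \<in> S2"
    unfolding pr2_brk c d using lie_brk.IH by (auto intro!: S2_add brk_Y_S2 brk_S2_Y brk_S1_S1)
  show ?case using 0 1 2 by simp
qed



definition prT :: "tens \<Rightarrow> tens" where
  "prT t = (\<lambda>(u,v). if xdeg u + xdeg v = 2 then t (u,v) else 0)"

lemma prT_tensor: "prT (tensor a b) = (\<lambda>p. tensor (pr 0 a) (pr 2 b) p + tensor (pr 1 a) (pr 1 b) p + tensor (pr 2 a) (pr 0 b) p)"
proof (rule ext)
  fix p :: "bool list \<times> bool list"
  obtain u v where p: "p = (u,v)" by (cases p)
  show "prT (tensor a b) p = tensor (pr 0 a) (pr 2 b) p + tensor (pr 1 a) (pr 1 b) p + tensor (pr 2 a) (pr 0 b) p"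
    unfolding p prT_def tensor_def pr_def by auto
qed

lemma tensor_add_left: "tensor (\<lambda>w. a w + b w) c = (\<lambda>p. tensor a c p + tensor b c p)"
  by (auto simp: fun_eq_iff tensor_def distrib_right)
lemma tensor_add_right: "tensor c (\<lambda>w. a w + b w) = (\<lambda>p. tensor c a p + tensor c b p)"
  by (auto simp: fun_eq_iff tensor_def distrib_left)
lemma tensor_smult_left: "tensor (\<lambda>w. k * a w) c = (\<lambda>p. k * tensor a c p)"
  by (auto simp: fun_eq_iff tensor_def)
lemma tensor_smult_right: "tensor c (\<lambda>w. k * a w) = (\<lambda>p. k * tensor c a p)"
  by (auto simp: fun_eq_iff tensor_def)
lemma tensor_neg_left: "tensor (\<lambda>w. - a w) c = (\<lambda>p. - tensor a c p)"
  by (auto simp: fun_eq_iff tensor_def)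
lemma tensor_zero_left: "tensor (\<lambda>w. 0) c = (\<lambda>p. 0)"
  by (auto simp: fun_eq_iff tensor_def)
lemma tensor_zero_right: "tensor c (\<lambda>w. 0) = (\<lambda>p. 0)"
  by (auto simp: fun_eq_iff tensor_def)

definition req :: "tens \<Rightarrow> tens \<Rightarrow> bool" where
  "req s t \<longleftrightarrow> (\<lambda>p. s p - t p) \<in> Rel"

lemma req_refl: "req s s"
  unfolding req_def using Rel_zero by simp

lemma req_trans: "req s t \<Longrightarrow> req t u \<Longrightarrow> req s u"
  unfolding req_def using Rel_add[of "\<lambda>p. s p - t p" "\<lambda>p. t p - u p"] by simp

lemma req_sym: "req s t \<Longrightarrow> req t s"
  unfolding req_def using Rel_smult[of "\<lambda>p. s p - t p" "-1"] by simp

lemma req_smult: "req s t \<Longrightarrow> req (\<lambda>p. c * s p) (\<lambda>p. c * t p)"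
  unfolding req_def using Rel_smult[of "\<lambda>p. s p - t p" c] by (simp add: right_diff_distrib)

definition Good :: "tens \<Rightarrow> bool" where
  "Good s \<longleftrightarrow> (\<exists>N c. (\<lambda>p. s p - (\<Sum>n<N. c n * delta n p)) \<in> Rel)"

lemma sum_ext0:
  assumes "N1 \<le> (N::nat)"
  shows "(\<Sum>n<N. (if n < N1 then c n else 0) * d n) = (\<Sum>n<N1. c n * (d n :: real))"
  by (rule sum.mono_neutral_cong_right) (use assms in auto)

lemma Good_I: "(\<lambda>p. s p - (\<Sum>n<N. c n * delta n p)) \<in> Rel \<Longrightarrow> Good s"
  unfolding Good_def by (rule exI[of _ N], rule exI[of _ c])

lemma Good_Rel: "s \<in> Rel \<Longrightarrow> Good s"
  unfolding Good_def by (rule exI[of _ 0]) simp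

lemma Good_zero: "Good (\<lambda>p. 0)"
  by (rule Good_Rel) (rule Rel_zero)

lemma Good_add: assumes "Good s" "Good t" shows "Good (\<lambda>p. s p + t p)"
proof -
  obtain N1 c1 where 1: "(\<lambda>p. s p - (\<Sum>n<N1. c1 n * delta n p)) \<in> Rel" using assms(1) Good_def by auto
  obtain N2 c2 where 2: "(\<lambda>p. t p - (\<Sum>n<N2. c2 n * delta n p)) \<in> Rel" using assms(2) Good_def by auto
  let ?N = "max N1 N2"
  let ?c = "\<lambda>n. (if n < N1 then c1 n else 0) + (if n < N2 then c2 n else 0)"
  have "(\<Sum>n<?N. ?c n * delta n p) = (\<Sum>n<N1. c1 n * delta n p) + (\<Sum>n<N2. c2 n * delta n p)" for p
    by (simp add: distrib_right sum.distrib sum_ext0)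
  then have "(\<lambda>p. (s p + t p) - (\<Sum>n<?N. ?c n * delta n p))
     = (\<lambda>p. (s p - (\<Sum>n<N1. c1 n * delta n p)) + (t p - (\<Sum>n<N2. c2 n * delta n p)))"
    by (simp add: fun_eq_iff)
  then have "(\<lambda>p. (s p + t p) - (\<Sum>n<?N. ?c n * delta n p)) \<in> Rel"
    using Rel_add[OF 1 2] by simp
  then show ?thesis by (rule Good_I)
qed

lemma Good_smult: assumes "Good s" shows "Good (\<lambda>p. k * s p)"
proof -
  obtain N c where 1: "(\<lambda>p. s p - (\<Sum>n<N. c n * delta n p)) \<in> Rel" using assms Good_def by auto
  have "(\<lambda>p. k * s p - (\<Sum>n<N. (k * c n) * delta n p)) = (\<lambda>p. k * (s p - (\<Sum>n<N. c n * delta n p)))"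
    by (simp add: fun_eq_iff right_diff_distrib sum_distrib_left mult.assoc)
  then have "(\<lambda>p. k * s p - (\<Sum>n<N. (k * c n) * delta n p)) \<in> Rel"
    using Rel_smult[OF 1, of k] by simp
  then show ?thesis by (rule Good_I)
qed

lemma Good_req: assumes "req s t" "Good t" shows "Good s"
proof -
  obtain N c where 1: "(\<lambda>p. t p - (\<Sum>n<N. c n * delta n p)) \<in> Rel" using assms(2) Good_def by auto
  have "(\<lambda>p. s p - (\<Sum>n<N. c n * delta n p)) = (\<lambda>p. (s p - t p) + (t p - (\<Sum>n<N. c n * delta n p)))"
    by (simp add: fun_eq_iff)
  then have "(\<lambda>p. s p - (\<Sum>n<N. c n * delta n p)) \<in> Rel"
    using Rel_add[OF assms(1)[unfolded req_def] 1] by simp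
  then show ?thesis by (rule Good_I)
qed

lemma Good_delta: "Good (delta n)"
proof -
  have "(\<Sum>m<Suc n. (if m = n then 1 else 0) * delta m p) = delta n p" for p
  proof -
    have "(\<Sum>m<Suc n. (if m = n then 1 else 0) * delta m p) = (\<Sum>m<Suc n. (if m = n then delta m p else 0))"
      by (rule sum.cong) auto
    also have "\<dots> = delta n p" by (subst sum.delta) auto
    finally show ?thesis .
  qed
  then have "(\<lambda>p. delta n p - (\<Sum>m<Suc n. (if m = n then 1 else 0) * delta m p)) = (\<lambda>p. 0)"
    by simp
  then show ?thesis unfolding Good_def using Rel_zero by (metis (no_types))
qed

lemma adx_step: "req (tensor (adx a) (adx (Suc b))) (\<lambda>p. - tensor (adx (Suc a)) (adx b) p)"
proof -
  have r: "(\<lambda>p. tensor (adx a) (brk genY (adx b)) p - tensor (brk (adx a) genY) (adx b) p) \<in> Rel"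
    by (rule Rel_inv[OF adx_lie lie_Y adx_lie])
  have "brk (adx a) genY = (\<lambda>w. - adx (Suc a) w)"
    by (subst brk_swap) (simp add: adY_def)
  then show ?thesis using r unfolding req_def by (simp add: adx_Suc[symmetric] tensor_neg_left)
qed

lemma adx_pair: "req (tensor (adx a) (adx b)) (\<lambda>p. (-1)^b * tensor (adx (a+b)) genX p)"
proof (induction b arbitrary: a)
  case 0 then show ?case using req_refl by simp
next
  case (Suc b)
  have "req (\<lambda>p. (-1) * tensor (adx (Suc a)) (adx b) p) (\<lambda>p. (-1) * ((-1)^b * tensor (adx (Suc a + b)) genX p))"
    by (rule req_smult) (rule Suc.IH)
  then have "req (\<lambda>p. - tensor (adx (Suc a)) (adx b) p) (\<lambda>p. (-1)^Suc b * tensor (adx (a + Suc b)) genX p)"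
    by simp
  then show ?case by (rule req_trans[OF adx_step])
qed

lemma x_adx_sym: "req (tensor (adx m) genX) (tensor genX (adx m))"
  unfolding req_def by (rule Rel_sym[OF adx_lie lie_X])

lemma odd_Rel: assumes "odd m" shows "tensor genX (adx m) \<in> Rel"
proof -
  have "req (tensor (adx 0) (adx m)) (\<lambda>p. (-1)^m * tensor (adx (0+m)) genX p)" by (rule adx_pair)
  then have "req (tensor genX (adx m)) (\<lambda>p. (-1) * tensor (adx m) genX p)" using assms by simp
  moreover have "req (\<lambda>p. (-1) * tensor (adx m) genX p) (\<lambda>p. (-1) * tensor genX (adx m) p)"
    by (rule req_smult) (rule x_adx_sym)
  ultimately have "req (tensor genX (adx m)) (\<lambda>p. (-1) * tensor genX (adx m) p)" by (rule req_trans)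
  then have "(\<lambda>p. 2 * tensor genX (adx m) p) \<in> Rel" unfolding req_def by simp
  then have "(\<lambda>p. (1/2) * (2 * tensor genX (adx m) p)) \<in> Rel" by (rule Rel_smult)
  then show ?thesis by simp
qed

lemma Good_x_adx: "Good (tensor genX (adx m))"
proof (cases "even m")
  case True
  then obtain n where "m = 2 * n" by auto
  then show ?thesis using Good_delta[of n] by (simp add: delta_def)
next
  case False
  then show ?thesis using odd_Rel Good_Rel by blast
qed

lemma Good_adx_adx: "Good (tensor (adx a) (adx b))"
proof -
  have "req (\<lambda>p. (-1)^b * tensor (adx (a+b)) genX p) (\<lambda>p. (-1)^b * tensor genX (adx (a+b)) p)"
    by (rule req_smult) (rule x_adx_sym)
  with adx_pair have "req (tensor (adx a) (adx b)) (\<lambda>p. (-1)^b * tensor genX (adx (a+b)) p)"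
    by (rule req_trans)
  then show ?thesis by (rule Good_req) (rule Good_smult, rule Good_x_adx)
qed

lemma Good_adx_S1: "t \<in> S1 \<Longrightarrow> Good (tensor (adx m) t)"
proof (induction rule: S1.induct)
  case S1_zero then show ?case by (simp add: tensor_zero_right Good_zero)
next
  case (S1_gen m') then show ?case by (rule Good_adx_adx)
next
  case (S1_add a b) then show ?case by (simp add: tensor_add_right Good_add)
next
  case (S1_smult a c) then show ?case by (simp add: tensor_smult_right Good_smult)
qed

lemma Good_S1_S1: "s \<in> S1 \<Longrightarrow> t \<in> S1 \<Longrightarrow> Good (tensor s t)"
proof (induction rule: S1.induct)
  case S1_zero then show ?case by (simp add: tensor_zero_left Good_zero)
next
  case (S1_gen m) then show ?case by (rule Good_adx_S1)
next
  case (S1_add a b) then show ?case by (simp add: tensor_add_left Good_add)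
next
  case (S1_smult a c) then show ?case by (simp add: tensor_smult_left Good_smult)
qed

lemma Good_Y_S2: "s \<in> S2 \<Longrightarrow> Good (tensor genY s)"
proof (induction rule: S2.induct)
  case S2_zero then show ?case by (simp add: tensor_zero_right Good_zero)
next
  case (S2_gen k i j)
  show ?case
  proof (cases k)
    case 0
    have "req (tensor genY (brk (adx i) (adx j))) (tensor (brk genY (adx i)) (adx j))"
      unfolding req_def by (rule Rel_inv[OF lie_Y adx_lie adx_lie])
    then have "req (tensor genY (brk (adx i) (adx j))) (tensor (adx (Suc i)) (adx j))"
      by (simp add: adY_def)
    then have "Good (tensor genY (brk (adx i) (adx j)))" by (rule Good_req[OF _ Good_adx_adx])
    then show ?thesis using 0 by simp
  next
    case (Suc k')
    let ?r = "(adY ^^ k') (brk (adx i) (adx j))"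
    have rl: "?r \<in> lie" by (intro adY_pow_lie lie_brk adx_lie)
    have "(\<lambda>p. tensor genY (brk genY ?r) p - tensor (brk genY genY) ?r p) \<in> Rel"
      by (rule Rel_inv[OF lie_Y lie_Y rl])
    then have "tensor genY (brk genY ?r) \<in> Rel"
      by (simp add: brk_self tensor_zero_left)
    then show ?thesis using Suc by (simp add: adY_def Good_Rel)
  qed
next
  case (S2_add a b) then show ?case by (simp add: tensor_add_right Good_add)
next
  case (S2_smult a c) then show ?case by (simp add: tensor_smult_right Good_smult)
qed

lemma Good_S0_S2: "s0 \<in> S0 \<Longrightarrow> s \<in> S2 \<Longrightarrow> Good (tensor s0 s)"
  by (auto simp: S0_def tensor_smult_left intro!: Good_smult Good_Y_S2)

lemma Good_S2_S0: assumes "s \<in> S2" "s0 \<in> S0" shows "Good (tensor s s0)"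
proof -
  have "req (tensor s s0) (tensor s0 s)"
    unfolding req_def by (rule Rel_sym[OF S2_lie[OF assms(1)] S0_lie[OF assms(2)]])
  then show ?thesis by (rule Good_req) (rule Good_S0_S2[OF assms(2,1)])
qed

lemma Good_prT: "s \<in> LL \<Longrightarrow> Good (prT s)"
proof (induction rule: LL.induct)
  case LL_zero
  have "prT (\<lambda>p. 0) = (\<lambda>p. 0)" by (auto simp: prT_def fun_eq_iff)
  then show ?case using Good_zero by simp
next
  case (LL_tensor a b)
  have a: "pr 0 a \<in> S0" "pr 1 a \<in> S1" "pr 2 a \<in> S2" using pr_lie[OF LL_tensor(1)] by auto
  have b: "pr 0 b \<in> S0" "pr 1 b \<in> S1" "pr 2 b \<in> S2" using pr_lie[OF LL_tensor(2)] by auto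
  show ?case unfolding prT_tensor
    by (intro Good_add Good_S0_S2 Good_S1_S1 Good_S2_S0 a b)
next
  case (LL_add s t)
  have "prT (\<lambda>p. s p + t p) = (\<lambda>p. prT s p + prT t p)" by (auto simp: prT_def fun_eq_iff)
  then show ?case using LL_add Good_add by simp
next
  case (LL_smult s c)
  have "prT (\<lambda>p. c * s p) = (\<lambda>p. c * prT s p)" by (auto simp: prT_def fun_eq_iff)
  then show ?case using LL_smult Good_smult by simp
qed

lemma prT_xdeg2: "t \<in> LL_xdeg2 \<Longrightarrow> prT t = t"
  by (auto simp: LL_xdeg2_def prT_def fun_eq_iff)

lemma delta_xdeg2: "delta n \<in> LL_xdeg2"
proof -
  have "delta n \<in> LL" unfolding delta_def by (rule LL_tensor[OF lie_X adx_lie])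
  moreover have "xdeg u + xdeg v = 2" if "delta n (u, v) \<noteq> 0" for u v
  proof -
    have "genX u \<noteq> 0" "adx (2*n) v \<noteq> 0" using that by (auto simp: delta_def tensor_def)
    then have "u = [True]" "xdeg v = 1" using adx_support by (auto simp: genX_def split: if_splits)
    then show ?thesis by (simp add: xdeg_def)
  qed
  ultimately show ?thesis unfolding LL_xdeg2_def by blast
qed

theorem mainTheorem6:
  shows "(\<forall>n. delta n \<in> LL_xdeg2)
    \<and> (\<forall>(N::nat) (c::nat \<Rightarrow> real).
          (\<lambda>p. \<Sum>n<N. c n * delta n p) \<in> Rel \<longrightarrow> (\<forall>n<N. c n = 0))
    \<and> (\<forall>t \<in> LL_xdeg2. \<exists>(N::nat) (c::nat \<Rightarrow> real).
          (\<lambda>p. t p - (\<Sum>n<N. c n * delta n p)) \<in> Rel)"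
proof (intro conjI allI impI ballI)
  fix n show "delta n \<in> LL_xdeg2" by (rule delta_xdeg2)
next
  fix N n and c :: "nat \<Rightarrow> real"
  assume "(\<lambda>p. \<Sum>n<N. c n * delta n p) \<in> Rel" "n < N"
  then show "c n = 0" by (rule lin_indep)
next
  fix t assume t: "t \<in> LL_xdeg2"
  then have "t \<in> LL" by (simp add: LL_xdeg2_def)
  then have "Good (prT t)" by (rule Good_prT)
  then show "\<exists>N c. (\<lambda>p. t p - (\<Sum>n<N. c n * delta n p)) \<in> Rel"
    using prT_xdeg2[OF t] by (simp add: Good_def)
qed

end
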